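(* Let $u\in\mathbb{R}^d$ be a utility vector, $\mathrm{util}(x)=u^Tx$, let $\epsilon\in[0,1]$, and let $A$ be a finite set of pairs $(y,z)$ of tuples in $\mathbb{R}^d$ with $\mathrm{util}(y)<\mathrm{util}(z)$ for each pair. Consider a tuple $x\in\mathbb{R}^d$ such that $\mathrm{util}(x)>\mathrm{util}(z)$ and $\mathrm{util}(x)-\mathrm{util}(z)>\epsilon\,\mathrm{util}(x)$ for every $(y,z)\in A$. Then there exists a vector $v\in\mathbb{R}^d$ such that, for all $(y,z)\in A$, $$v^T(z-y)\ge 1,\qquad v^T(x-z)\ge 1,\qquad v^T((1-\epsilon)x-z)\ge 1.$$ *)

theory Defs
  imports "HOL-Analysis.Analysis"
begin

end

theory Submission
  imports Defs
begin

theorem proposition6p1: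
  fixes u x :: "real ^ 'd" and \<epsilon> :: real and A :: "((real ^ 'd) \<times> (real ^ 'd)) set"
  assumes "0 \<le> \<epsilon>" and "\<epsilon> \<le> 1"
    and "finite A"
    and "\<forall>(y, z) \<in> A. u \<bullet> y < u \<bullet> z"
    and "\<forall>(y, z) \<in> A. u \<bullet> x > u \<bullet> z"
    and "\<forall>(y, z) \<in> A. u \<bullet> x - u \<bullet> z > \<epsilon> * (u \<bullet> x)"
  shows "\<exists>v :: real ^ 'd. \<forall>(y, z) \<in> A.
           v \<bullet> (z - y) \<ge> 1 \<and> v \<bullet> (x - z) \<ge> 1 \<and> v \<bullet> ((1 - \<epsilon>) *\<^sub>R x - z) \<ge> 1"
proof (cases "A = {}")
  case True
  then show ?thesis by auto
next
  case False
  define f where "f = (\<lambda>p::(real ^ 'd) \<times> (real ^ 'd).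
     min (u \<bullet> (snd p - fst p)) (min (u \<bullet> (x - snd p)) (u \<bullet> ((1 - \<epsilon>) *\<^sub>R x - snd p))))"
  have pos: "f p > 0" if "p \<in> A" for p
  proof -
    obtain y z where p: "p = (y, z)" by (cases p)
    have "u \<bullet> y < u \<bullet> z" "u \<bullet> x > u \<bullet> z" "u \<bullet> x - u \<bullet> z > \<epsilon> * (u \<bullet> x)"
      using assms(4-6) that p by auto
    then show ?thesis unfolding f_def p
      by (simp add: inner_diff_right algebra_simps)
  qed
  define m where "m = Min (f ` A)"
  have fin: "finite (f ` A)" using assms(3) by simp
  have mpos: "m > 0" unfolding m_def using fin False pos by (subst Min_gr_iff) auto
  have mle: "m \<le> f p" if "p \<in> A" for p unfolding m_def using fin that by simp
  show ?thesis
  proof (intro exI[of _ "(1/m) *\<^sub>R u"] ballI, clarify)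
    fix y z assume yz: "(y, z) \<in> A"
    have h: "m \<le> f (y, z)" using mle yz by blast
    have k: "1 \<le> (1/m) * q" if "m \<le> q" for q
      using that mpos by (simp add: field_simps)
    show "1 \<le> (1/m) *\<^sub>R u \<bullet> (z - y) \<and> 1 \<le> (1/m) *\<^sub>R u \<bullet> (x - z) \<and>
          1 \<le> (1/m) *\<^sub>R u \<bullet> ((1 - \<epsilon>) *\<^sub>R x - z)"
      using k h unfolding f_def by (simp add: inner_scaleR_left)
  qed
qed

end
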